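(* For $s\in\mu_r$, $v\in\mathcal{A}_1$, $w\in\mathcal{A}_r$: \[ vz\diamond_s w=v\diamond_s wz=(v\diamond_s w)z . \]
   Context: Fix $r\ge1$, $\mu_r$ the $r$th roots of unity, $\mathcal{A}_r=\mathbb{Q}\langle x,y_s\mid s\in\mu_r\rangle$ the free noncommutative polynomial algebra over $\mathbb{Q}$, $\mathcal{A}_1=\mathbb{Q}\langle x,y\rangle$ with $y=y_1$. Write $z=x+y_1$, $z_s=x+y_s$, $\delta(1)=0$, $\delta(s)=1$ ($s\ne1$), $z_s^\delta=x+\delta(s)y_s$, $z_{k,s}=x^{k-1}y_s$. Let $\varphi$ be the algebra automorphism of $\mathcal{A}_r$ with $\varphi(x)=z$, $\varphi(y_s)=\delta(s)y_s-y_1$. Every word is uniquely $z_{k_1,s_1}\cdots z_{k_l,s_l}x^a$ ($l,a\ge0$); define linear maps $\mathcal{I}(z_{k_1,s_1}\cdots z_{k_l,s_l}x^a)=z_{k_1,s_1}z_{k_2,s_1s_2}\cdots z_{k_l,s_1\cdots s_l}x^a$ and $M_s(z_{k_1,s_1}\cdots z_{k_l,s_l}x^a)=z_{k_1,ss_1}z_{k_2,s_2}\cdots z_{k_l,s_l}x^a$ (with $M_s(x^a)=x^a$), and $\psi_s=\varphi\circ\mathcal{I}\circ M_s$. Diamond product: for $s\in\mu_r$, $\diamond_s:\mathcal{A}_1\times\mathcal{A}_r\to\mathcal{A}_r$ is the $\mathbb{Q}$-bilinear map defined recursively on words by $1\diamond_s w=w$, $v\diamond_s1=\psi_s\varphi(v)$,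 and for $v\in\mathcal{A}_1$, $w\in\mathcal{A}_r$, $1\ne t\in\mu_r$: $vx\diamond_s wx=(v\diamond_s wx)x-(vy\diamond_s w)x$; $vy\diamond_s wx=(v\diamond_s wx)y+(vy\diamond_s w)x$; $vx\diamond_s wy=(v\diamond_s wy)x+(vx\diamond_s w)y$; $vy\diamond_s wy=(v\diamond_s wy)y-(vx\diamond_s w)y$; $vx\diamond_s wy_t=(v\diamond_s wy_t)x+(v\diamond_s wz_t)y_t-(vy\diamond_s w)y_t$; $vy\diamond_s wy_t=(v\diamond_s wy_t)y-(v\diamond_s wz_t)y_t+(vy\diamond_s w)y_t$. *)

theory Defs
  imports Complex_Main "HOL-Library.Poly_Mapping"
begin

text \<open>Letters of the free algebra: x and y_s, where s is a complex number;
  elements of mu_r are the complex s with s^r = 1 (and 1 is the root s = 1).\<close>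
datatype letter = X | Y complex

type_synonym word = "letter list"
type_synonym ncpoly = "word \<Rightarrow>\<^sub>0 rat"

definition wmon :: "word \<Rightarrow> ncpoly" where
  "wmon w = Poly_Mapping.single w 1"

definition pscale :: "rat \<Rightarrow> ncpoly \<Rightarrow> ncpoly" where
  "pscale c p = Poly_Mapping.map (\<lambda>a. c * a) p"

definition lin :: "(word \<Rightarrow> ncpoly) \<Rightarrow> ncpoly \<Rightarrow> ncpoly" where
  "lin f p = (\<Sum>u\<in>Poly_Mapping.keys p. pscale (Poly_Mapping.lookup p u) (f u))"

definition pmul :: "ncpoly \<Rightarrow> ncpoly \<Rightarrow> ncpoly" where
  "pmul p q = lin (\<lambda>u. lin (\<lambda>v. wmon (u @ v)) q) p"

definition inA1 :: "ncpoly \<Rightarrow> bool" where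
  "inA1 p \<longleftrightarrow> (\<forall>u\<in>Poly_Mapping.keys p. set u \<subseteq> {X, Y 1})"

definition inAr :: "nat \<Rightarrow> ncpoly \<Rightarrow> bool" where
  "inAr r p \<longleftrightarrow> (\<forall>u\<in>Poly_Mapping.keys p. \<forall>c. Y c \<in> set u \<longrightarrow> c ^ r = 1)"

definition zp :: ncpoly where
  "zp = wmon [X] + wmon [Y 1]"

definition delta :: "complex \<Rightarrow> rat" where
  "delta s = (if s = 1 then 0 else 1)"

fun phi_letter :: "letter \<Rightarrow> ncpoly" where
  "phi_letter X = wmon [X] + wmon [Y 1]"
| "phi_letter (Y s) = pscale (delta s) (wmon [Y s]) - wmon [Y 1]"

fun phi_word :: "word \<Rightarrow> ncpoly" where
  "phi_word [] = wmon []"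
| "phi_word (a # w) = pmul (phi_letter a) (phi_word w)"

definition phiL :: "ncpoly \<Rightarrow> ncpoly" where
  "phiL = lin phi_word"

fun Iw :: "complex \<Rightarrow> word \<Rightarrow> word" where
  "Iw t [] = []"
| "Iw t (X # w) = X # Iw t w"
| "Iw t (Y u # w) = Y (t * u) # Iw (t * u) w"

fun Mw :: "complex \<Rightarrow> word \<Rightarrow> word" where
  "Mw s [] = []"
| "Mw s (X # w) = X # Mw s w"
| "Mw s (Y t # w) = Y (s * t) # w"

definition psiL :: "complex \<Rightarrow> ncpoly \<Rightarrow> ncpoly" where
  "psiL s = lin (\<lambda>w. phi_word (Iw 1 (Mw s w)))"

definition rmul :: "ncpoly \<Rightarrow> letter \<Rightarrow> ncpoly" where
  "rmul p a = lin (\<lambda>u. wmon (u @ [a])) p"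

text \<open>Diamond product on words, stored reversed (head = last letter).
  Words v containing letters other than x, y_1 are outside A_1 and get the junk value 0.\<close>
function dr :: "complex \<Rightarrow> word \<Rightarrow> word \<Rightarrow> ncpoly" where
  "dr s [] rw = wmon (rev rw)"
| "dr s (a # rv) [] = psiL s (phiL (wmon (rev (a # rv))))"
| "dr s (a # rv) (b # rw) =
    (case a of
       X \<Rightarrow> (case b of
              X \<Rightarrow> rmul (dr s rv (X # rw)) X - rmul (dr s (Y 1 # rv) rw) X
            | Y t \<Rightarrow> (if t = 1 then
                        rmul (dr s rv (Y 1 # rw)) X + rmul (dr s (X # rv) rw) (Y 1)
                      else
                        rmul (dr s rv (Y t # rw)) X
                        + rmul (dr s rv (X # rw) + dr s rv (Y t # rw)) (Y t)
                        - rmul (dr s (Y 1 # rv) rw) (Y t)))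
     | Y u \<Rightarrow> (if u = 1 then
                (case b of
                   X \<Rightarrow> rmul (dr s rv (X # rw)) (Y 1) + rmul (dr s (Y 1 # rv) rw) X
                 | Y t \<Rightarrow> (if t = 1 then
                             rmul (dr s rv (Y 1 # rw)) (Y 1) - rmul (dr s (X # rv) rw) (Y 1)
                           else
                             rmul (dr s rv (Y t # rw)) (Y 1)
                             - rmul (dr s rv (X # rw) + dr s rv (Y t # rw)) (Y t)
                             + rmul (dr s (Y 1 # rv) rw) (Y t)))
              else 0))"
  by pat_completeness auto
termination
  by (relation "measure (\<lambda>(s, rv, rw). length rv + length rw)") auto

definition diamond :: "complex \<Rightarrow> ncpoly \<Rightarrow> ncpoly \<Rightarrow> ncpoly" where
  "diamond s v w = lin (\<lambda>a. lin (\<lambda>b. dr s (rev a) (rev b)) w) v"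

end

theory Submission
  imports Defs
begin

lemma lookup_pscale[simp]: "Poly_Mapping.lookup (pscale c p) u = c * Poly_Mapping.lookup p u"
  unfolding pscale_def by (simp add: Poly_Mapping.map.rep_eq when_def)

lemma pscale_zero_left[simp]: "pscale 0 p = 0"
  by (rule poly_mapping_eqI) simp
lemma pscale_zero_right[simp]: "pscale c 0 = 0"
  by (rule poly_mapping_eqI) simp
lemma pscale_add_left: "pscale (a + b) p = pscale a p + pscale b p"
  by (rule poly_mapping_eqI) (simp add: lookup_add algebra_simps)
lemma pscale_add_right: "pscale c (p + q) = pscale c p + pscale c q"
  by (rule poly_mapping_eqI) (simp add: lookup_add algebra_simps)
lemma pscale_mult: "pscale c (pscale a p) = pscale (c * a) p"
  by (rule poly_mapping_eqI) simp
lemma pscale_one[simp]: "pscale 1 p = p"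
  by (rule poly_mapping_eqI) simp
lemma pscale_sum: "pscale c (sum f S) = (\<Sum>i\<in>S. pscale c (f i))"
  by (induction S rule: infinite_finite_induct) (auto simp: pscale_add_right)

lemma keys_pscale: "Poly_Mapping.keys (pscale c p) \<subseteq> Poly_Mapping.keys p"
  by (auto simp: in_keys_iff)

lemma lin_superset:
  assumes "finite S" "Poly_Mapping.keys p \<subseteq> S"
  shows "lin f p = (\<Sum>u\<in>S. pscale (Poly_Mapping.lookup p u) (f u))"
  unfolding lin_def
  by (rule sum.mono_neutral_left) (use assms in \<open>auto simp: in_keys_iff\<close>)

lemma lin_add: "lin f (p + q) = lin f p + lin f q"
proof -
  let ?S = "Poly_Mapping.keys p \<union> Poly_Mapping.keys q"
  have "lin f (p + q) = (\<Sum>u\<in>?S. pscale (Poly_Mapping.lookup (p+q) u) (f u))"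
    using keys_add[of p q] by (intro lin_superset) auto
  also have "\<dots> = (\<Sum>u\<in>?S. pscale (Poly_Mapping.lookup p u) (f u))
                 + (\<Sum>u\<in>?S. pscale (Poly_Mapping.lookup q u) (f u))"
    by (simp add: lookup_add pscale_add_left sum.distrib)
  also have "\<dots> = lin f p + lin f q"
    by (subst (1 2) lin_superset[where S="?S"]) auto
  finally show ?thesis .
qed

lemma lin_zero[simp]: "lin f 0 = 0"
  by (simp add: lin_def)

lemma lin_diff: "lin f (p - q) = lin f p - lin f q"
  by (metis lin_add eq_diff_eq)

lemma lin_pscale: "lin f (pscale c p) = pscale c (lin f p)"
proof -
  have "lin f (pscale c p) = (\<Sum>u\<in>Poly_Mapping.keys p. pscale (Poly_Mapping.lookup (pscale c p) u) (f u))"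
    by (rule lin_superset) (auto simp: keys_pscale)
  then show ?thesis by (simp add: lin_def pscale_sum pscale_mult)
qed

lemma lin_wmon[simp]: "lin f (wmon u) = f u"
  by (simp add: lin_def wmon_def)

lemma lin_sum: "lin f (sum g S) = (\<Sum>i\<in>S. lin f (g i))"
  by (induction S rule: infinite_finite_induct) (auto simp: lin_add)

lemma lin_lin: "lin f (lin g p) = lin (\<lambda>u. lin f (g u)) p"
proof -
  have "lin g p = (\<Sum>u\<in>Poly_Mapping.keys p. pscale (Poly_Mapping.lookup p u) (g u))"
    by (simp add: lin_def)
  then show ?thesis by (simp add: lin_sum lin_pscale lin_def[of _ p])
qed

lemma lin_fadd: "lin (\<lambda>u. f u + g u) p = lin f p + lin g p"
  by (simp add: lin_def pscale_add_right sum.distrib)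

lemma lin_cong: "(\<And>u. u \<in> Poly_Mapping.keys p \<Longrightarrow> f u = g u) \<Longrightarrow> lin f p = lin g p"
  by (simp add: lin_def)

lemma lookup_lin: "Poly_Mapping.lookup (lin f p) k
   = (\<Sum>u\<in>Poly_Mapping.keys p. Poly_Mapping.lookup p u * Poly_Mapping.lookup (f u) k)"
  by (simp add: lin_def lookup_sum)

lemma lin_wmon_id[simp]: "lin wmon p = p"
proof (rule poly_mapping_eqI)
  fix k
  show "Poly_Mapping.lookup (lin wmon p) k = Poly_Mapping.lookup p k"
  proof -
    have "(\<Sum>u\<in>Poly_Mapping.keys p. Poly_Mapping.lookup p u * Poly_Mapping.lookup (wmon u) k)
        = (\<Sum>u\<in>Poly_Mapping.keys p. if u = k then Poly_Mapping.lookup p u else 0)"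
      by (rule sum.cong) (auto simp: wmon_def lookup_single when_def)
    then show ?thesis by (simp add: lookup_lin in_keys_iff)
  qed
qed

definition zr :: "ncpoly \<Rightarrow> ncpoly" where
  "zr p = rmul p X + rmul p (Y 1)"

definition zw :: "word \<Rightarrow> ncpoly" where
  "zw u = wmon (u @ [X]) + wmon (u @ [Y 1])"

lemma zr_lin_def: "zr p = lin zw p"
  by (simp add: zr_def rmul_def zw_def[abs_def] lin_fadd)

lemma rmul_add: "rmul (p + q) a = rmul p a + rmul q a"
  by (simp add: rmul_def lin_add)
lemma rmul_diff: "rmul (p - q) a = rmul p a - rmul q a"
  by (simp add: rmul_def lin_diff)
lemma rmul_wmon: "rmul (wmon u) a = wmon (u @ [a])"
  by (simp add: rmul_def)

lemma zr_add: "zr (p + q) = zr p + zr q"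
  by (simp add: zr_lin_def lin_add)

lemma zr_lin: "zr (lin h p) = lin (\<lambda>u. zr (h u)) p"
  by (simp add: zr_lin_def lin_lin)

lemma pmul_zp: "pmul p zp = zr p"
  by (simp add: pmul_def zp_def zr_lin_def zw_def[abs_def] lin_add)

lemma pmul_add_right: "pmul p (q1 + q2) = pmul p q1 + pmul p q2"
  by (simp add: pmul_def lin_add lin_fadd)

lemma pmul_rmul: "pmul p (rmul q a) = rmul (pmul p q) a"
  by (simp add: pmul_def rmul_def lin_lin)

lemma pmul_zr: "pmul p (zr q) = zr (pmul p q)"
  by (simp add: zr_def pmul_add_right pmul_rmul)

lemma pmul_unit: "pmul p (wmon []) = p"
  by (simp add: pmul_def)

lemma phi_snoc: "phi_word (u @ [X]) + phi_word (u @ [Y 1]) = rmul (phi_word u) X"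
proof (induction u)
  case Nil
  then show ?case by (simp add: pmul_unit delta_def rmul_wmon)
next
  case (Cons a u)
  then show ?case by (simp add: pmul_add_right[symmetric] pmul_rmul)
qed

lemma phi_snocX: "phi_word (u @ [X]) = zr (phi_word u)"
proof (induction u)
  case Nil
  then show ?case by (simp add: pmul_unit zr_def rmul_wmon)
next
  case (Cons a u)
  then show ?case by (simp add: pmul_zr)
qed

lemma Mw_snoc: "Mw s (u @ [X]) = Mw s u @ [X]"
  by (induction s u rule: Mw.induct) auto

lemma Iw_snoc: "Iw t (u @ [X]) = Iw t u @ [X]"
  by (induction t u rule: Iw.induct) auto

lemma psiL_add: "psiL s (p + q) = psiL s p + psiL s q"
  by (simp add: psiL_def lin_add)

lemma psiL_rmulX: "psiL s (rmul p X) = zr (psiL s p)"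
  by (simp add: psiL_def rmul_def lin_lin zr_lin Mw_snoc Iw_snoc phi_snocX)

lemma psiL_nil: "psiL s (wmon []) = wmon []"
  by (simp add: psiL_def)

lemma phiL_wmon: "phiL (wmon u) = phi_word u"
  by (simp add: phiL_def)

lemma lemC: "dr s (X # rv) rw + dr s (Y 1 # rv) rw = zr (dr s rv rw)"
proof (cases rw)
  case Nil
  have "dr s (X # rv) rw + dr s (Y 1 # rv) rw = psiL s (rmul (phi_word (rev rv)) X)"
    using Nil by (simp add: phiL_wmon psiL_add[symmetric] phi_snoc)
  also have "\<dots> = zr (dr s rv rw)"
    using Nil by (cases rv) (simp_all add: psiL_rmulX phiL_wmon psiL_nil)
  finally show ?thesis .
next
  case (Cons b rw')
  then show ?thesis
    by (cases b) (auto simp: zr_def rmul_add rmul_diff algebra_simps)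
qed

lemma lemB: "set rv \<subseteq> {X, Y 1} \<Longrightarrow> dr s rv (X # rw) + dr s rv (Y 1 # rw) = zr (dr s rv rw)"
proof (induction rv arbitrary: rw)
  case Nil
  then show ?case by (simp add: zr_def rmul_wmon)
next
  case (Cons a rv)
  have IH: "dr s rv (X # rw) + dr s rv (Y 1 # rw) = dr s (X # rv) rw + dr s (Y 1 # rv) rw"
    using Cons lemC by simp
  hence e: "dr s rv (Y 1 # rw) = dr s (X # rv) rw + dr s (Y 1 # rv) rw - dr s rv (X # rw)"
    by (simp add: algebra_simps)
  from Cons.prems have "a = X \<or> a = Y 1" by auto
  then show ?case
  proof
    assume "a = X"
    then show ?thesis
      by (simp add: e zr_def rmul_add rmul_diff algebra_simps)
  next
    assume "a = Y 1"
    then show ?thesis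
      by (simp add: e zr_def rmul_add rmul_diff algebra_simps)
  qed
qed

lemma lemA: "set rv \<subseteq> {X, Y 1} \<Longrightarrow>
   dr s (X # rv) rw + dr s (Y 1 # rv) rw = dr s rv (X # rw) + dr s rv (Y 1 # rw)"
  by (simp add: lemC lemB)

theorem mainTheorem7:
  fixes r :: nat and s :: complex and v w :: ncpoly
  assumes "r \<ge> 1" and "s ^ r = 1" and "inA1 v" and "inAr r w"
  shows "diamond s (pmul v zp) w = diamond s v (pmul w zp)
       \<and> diamond s v (pmul w zp) = pmul (diamond s v w) zp"
proof -
  have A1: "set (rev a) \<subseteq> {X, Y 1}" if "a \<in> Poly_Mapping.keys v" for a
    using assms(3) that by (auto simp: inA1_def)
  have mid: "diamond s v (pmul w zp)
      = lin (\<lambda>a. lin (\<lambda>u. zr (dr s (rev a) (rev u))) w) v"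
    unfolding diamond_def pmul_zp zr_lin_def[of w] lin_lin
    by (rule lin_cong, rule lin_cong) (simp add: zw_def lin_add lemB[OF A1] zr_lin_def)
  have left: "diamond s (pmul v zp) w
      = lin (\<lambda>a. lin (\<lambda>u. zr (dr s (rev a) (rev u))) w) v"
    unfolding diamond_def pmul_zp zr_lin_def[of v] lin_lin
    by (rule lin_cong) (simp add: zw_def lin_add lin_fadd[symmetric] lemA[OF A1] lemB[OF A1] zr_lin_def)
  have right: "pmul (diamond s v w) zp
      = lin (\<lambda>a. lin (\<lambda>u. zr (dr s (rev a) (rev u))) w) v"
    unfolding diamond_def pmul_zp zr_lin by simp
  show ?thesis using mid left right by simp
qed

end
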